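(* Let $R$ be a commutative ring. The following are equivalent: (1) $R$ is feckly clean; (2) $\operatorname{Max}(R)$ is a strongly zero-dimensional Hausdorff space; (3) $\operatorname{Max}(R)$ is strongly zero-dimensional, and whenever $a,b\in R$ satisfy $a+b=1$ there exist $r,s\in R$ with $(1+ar)(1+bs)\in J(R)$; (4) whenever $a,b\in R$ satisfy $a+b=1$, there exist $r,s,e\in R$ with $1+ar\in eR$, $1+bs\in(1-e)R$ and $e-e^2\in J(R)$.
   Context: Rings have identity; $J(R)$ is the Jacobson radical. An element $u\in R$ is full if $RuR=R$ (for commutative $R$ this means $u$ is a unit). An element $a\in R$ is feckly clean if there exist $e\in R$ and a full element $u\in R$ with $a=e+u$ and $eR(1-e)\subseteq J(R)$; $R$ is feckly clean if every element is feckly clean. $\operatorname{Max}(R)$ is the set of maximal ideals of $R$, topologized so that the closed sets are exactly the sets $V(I)=\{P\in\operatorname{Max}(R): I\subseteq P\}$ for ideals $I$. A topological space $X$ is strongly zero-dimensional if for any two disjoint closed sets $A,B\subseteq X$ there exist disjoint clopen sets $C_1,C_2$ with $A\subseteq C_1$ and $B\subseteq C_2$. *)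

theory Defs
  imports "HOL-Analysis.Analysis" "HOL-Algebra.Ideal"
begin

definition MaxSpec :: "('a, 'b) ring_scheme \<Rightarrow> 'a set set" where
  "MaxSpec R = {P. maximalideal P R}"

definition Vmax :: "('a, 'b) ring_scheme \<Rightarrow> 'a set \<Rightarrow> 'a set set" where
  "Vmax R I = {P \<in> MaxSpec R. I \<subseteq> P}"

text \<open>The topology on Max(R) whose closed sets are exactly the V(I), I an ideal:
  its open sets are the complements Max(R) - V(I) (these already form a topology,
  so the generated topology has exactly them as open sets).\<close>
definition MaxTop :: "('a, 'b) ring_scheme \<Rightarrow> 'a set topology" where
  "MaxTop R = topology_generated_by {MaxSpec R - Vmax R I | I. ideal I R}"

definition jacobson :: "('a, 'b) ring_scheme \<Rightarrow> 'a set" where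
  "jacobson R = carrier R \<inter> \<Inter>(MaxSpec R)"

definition full :: "('a, 'b) ring_scheme \<Rightarrow> 'a \<Rightarrow> bool" where
  "full R u \<longleftrightarrow> u \<in> carrier R \<and> genideal R {u} = carrier R"

definition feckly_clean_elem :: "('a, 'b) ring_scheme \<Rightarrow> 'a \<Rightarrow> bool" where
  "feckly_clean_elem R a \<longleftrightarrow>
     (\<exists>e \<in> carrier R. \<exists>u \<in> carrier R. full R u \<and> a = e \<oplus>\<^bsub>R\<^esub> u \<and>
        {e \<otimes>\<^bsub>R\<^esub> r \<otimes>\<^bsub>R\<^esub> (\<one>\<^bsub>R\<^esub> \<ominus>\<^bsub>R\<^esub> e) | r. r \<in> carrier R} \<subseteq> jacobson R)"

definition feckly_clean :: "('a, 'b) ring_scheme \<Rightarrow> bool" where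
  "feckly_clean R \<longleftrightarrow> (\<forall>a \<in> carrier R. feckly_clean_elem R a)"

definition strongly_zero_dimensional :: "'a topology \<Rightarrow> bool" where
  "strongly_zero_dimensional X \<longleftrightarrow>
     (\<forall>A B. closedin X A \<and> closedin X B \<and> A \<inter> B = {} \<longrightarrow>
        (\<exists>C1 C2. closedin X C1 \<and> openin X C1 \<and> closedin X C2 \<and> openin X C2 \<and>
                 C1 \<inter> C2 = {} \<and> A \<subseteq> C1 \<and> B \<subseteq> C2))"

end

theory Submission
  imports Defs
begin


lemma (in ring) krull:
  assumes "ideal I R" "\<one> \<notin> I"
  shows "\<exists>M. maximalideal M R \<and> I \<subseteq> M"
proof -
  let ?A = "{K. ideal K R \<and> I \<subseteq> K \<and> \<one> \<notin> K}"
  have "\<exists>M\<in>?A. \<forall>X\<in>?A. M \<subseteq> X \<longrightarrow> X = M"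
  proof (rule subset_Zorn_nonempty)
    show "?A \<noteq> {}" using assms by blast
    fix C assume C: "C \<noteq> {}" "subset.chain ?A C"
    then have CA: "C \<subseteq> ?A" and ch: "\<forall>X\<in>C. \<forall>Y\<in>C. X \<subseteq> Y \<or> Y \<subseteq> X"
      by (auto simp: subset.chain_def)
    have id: "ideal K R" if "K \<in> C" for K using that CA by blast
    have two: "\<exists>K\<in>C. x \<in> K \<and> y \<in> K" if "x \<in> \<Union>C" "y \<in> \<Union>C" for x y
      using that ch by blast
    have "ideal (\<Union>C) R"
    proof (intro idealI subgroup.intro)
      show "ring R" by (rule ring_axioms)
      show "\<Union>C \<subseteq> carrier (add_monoid R)"
      proof
        fix x assume "x \<in> \<Union>C"
        then obtain K where K: "K \<in> C" "x \<in> K" by blast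
        show "x \<in> carrier (add_monoid R)" using ideal.Icarr[OF id[OF K(1)] K(2)] by simp
      qed
      fix x y assume "x \<in> \<Union>C" "y \<in> \<Union>C"
      then obtain K where K: "K \<in> C" "x \<in> K" "y \<in> K" using two by blast
      have "x \<oplus> y \<in> K"
        by (rule additive_subgroup.a_closed[OF ideal.axioms(1)[OF id[OF K(1)]] K(2) K(3)])
      then show "x \<otimes>\<^bsub>add_monoid R\<^esub> y \<in> \<Union>C" using K(1) by auto
    next
      obtain K where K: "K \<in> C" using C by blast
      have "\<zero> \<in> K"
        by (rule additive_subgroup.zero_closed[OF ideal.axioms(1)[OF id[OF K]]])
      then show "\<one>\<^bsub>add_monoid R\<^esub> \<in> \<Union>C" using K by auto
    next
      fix x assume "x \<in> \<Union>C"
      then obtain K where K: "K \<in> C" "x \<in> K" by blast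
      have "\<ominus> x \<in> K"
        by (rule additive_subgroup.a_inv_closed[OF ideal.axioms(1)[OF id[OF K(1)]] K(2)])
      then show "inv\<^bsub>add_monoid R\<^esub> x \<in> \<Union>C" using K(1) by (auto simp: a_inv_def)
    next
      fix a x assume "a \<in> \<Union>C" "x \<in> carrier R"
      then obtain K where K: "K \<in> C" "a \<in> K" by blast
      have "x \<otimes> a \<in> K" "a \<otimes> x \<in> K"
        using ideal.I_l_closed[OF id[OF K(1)] K(2) \<open>x \<in> carrier R\<close>]
              ideal.I_r_closed[OF id[OF K(1)] K(2) \<open>x \<in> carrier R\<close>] by auto
      then show "x \<otimes> a \<in> \<Union>C" "a \<otimes> x \<in> \<Union>C" using K(1) by auto
    qed
    moreover have "I \<subseteq> \<Union>C" using C CA by blast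
    moreover have "\<one> \<notin> \<Union>C" using CA by blast
    ultimately show "\<Union>C \<in> ?A" by blast
  qed
  then obtain M where M: "M \<in> ?A" and mx: "\<forall>X\<in>?A. M \<subseteq> X \<longrightarrow> X = M" by blast
  have "maximalideal M R"
  proof (rule maximalidealI)
    show "ideal M R" using M by blast
    show "carrier R \<noteq> M" using M by auto
    fix J assume J: "ideal J R" "M \<subseteq> J" "J \<subseteq> carrier R"
    show "J = M \<or> J = carrier R"
    proof (cases "\<one> \<in> J")
      case True then show ?thesis using ideal.one_imp_carrier[OF J(1)] by blast
    next
      case False then show ?thesis using mx J M by blast
    qed
  qed
  then show ?thesis using M by blast
qed



context cring begin

lemma mx: "M \<in> MaxSpec R \<Longrightarrow> maximalideal M R" by (simp add: MaxSpec_def)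
lemma mx_ideal: "M \<in> MaxSpec R \<Longrightarrow> ideal M R" using mx maximalideal.axioms(1) by blast
lemma mx_one: "M \<in> MaxSpec R \<Longrightarrow> \<one> \<notin> M"
  using mx maximalideal.I_notcarr ideal.one_imp_carrier mx_ideal by metis
lemma mx_prime: "M \<in> MaxSpec R \<Longrightarrow> a \<in> carrier R \<Longrightarrow> b \<in> carrier R \<Longrightarrow> a \<otimes> b \<in> M \<Longrightarrow> a \<in> M \<or> b \<in> M"
  using primeideal.I_prime[OF maximalideal_prime[OF mx]] by blast
lemma mx_carr: "M \<in> MaxSpec R \<Longrightarrow> x \<in> M \<Longrightarrow> x \<in> carrier R"
  using ideal.Icarr[OF mx_ideal] by blast
lemma mx_add: "M \<in> MaxSpec R \<Longrightarrow> x \<in> M \<Longrightarrow> y \<in> M \<Longrightarrow> x \<oplus> y \<in> M"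
  using additive_subgroup.a_closed[OF ideal.axioms(1)[OF mx_ideal]] by blast
lemma mx_zero: "M \<in> MaxSpec R \<Longrightarrow> \<zero> \<in> M"
  using additive_subgroup.zero_closed[OF ideal.axioms(1)[OF mx_ideal]] by blast
lemma mx_inv: "M \<in> MaxSpec R \<Longrightarrow> x \<in> M \<Longrightarrow> \<ominus> x \<in> M"
  using additive_subgroup.a_inv_closed[OF ideal.axioms(1)[OF mx_ideal]] by blast
lemma mx_minus: "M \<in> MaxSpec R \<Longrightarrow> x \<in> M \<Longrightarrow> y \<in> M \<Longrightarrow> x \<ominus> y \<in> M"
  by (simp add: a_minus_def mx_add mx_inv)
lemma mx_multl: "M \<in> MaxSpec R \<Longrightarrow> x \<in> M \<Longrightarrow> y \<in> carrier R \<Longrightarrow> y \<otimes> x \<in> M"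
  using ideal.I_l_closed[OF mx_ideal] by blast
lemma mx_multr: "M \<in> MaxSpec R \<Longrightarrow> x \<in> M \<Longrightarrow> y \<in> carrier R \<Longrightarrow> x \<otimes> y \<in> M"
  using ideal.I_r_closed[OF mx_ideal] by blast

lemma jac_iff: "x \<in> jacobson R \<longleftrightarrow> x \<in> carrier R \<and> (\<forall>M\<in>MaxSpec R. x \<in> M)"
  unfolding jacobson_def by auto

lemma V_PIdl: "a \<in> carrier R \<Longrightarrow> Vmax R (PIdl a) = {M\<in>MaxSpec R. a \<in> M}"
  unfolding Vmax_def using cgenideal_minimal cgenideal_self mx_ideal by blast

lemma not_in_max_full: "x \<in> carrier R \<Longrightarrow> (\<forall>M\<in>MaxSpec R. x \<notin> M) \<Longrightarrow> full R x"
proof -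
  assume x: "x \<in> carrier R" and n: "\<forall>M\<in>MaxSpec R. x \<notin> M"
  have I: "ideal (Idl {x}) R" using genideal_ideal x by simp
  have "\<one> \<in> Idl {x}"
  proof (rule ccontr)
    assume "\<one> \<notin> Idl {x}"
    then obtain M where "maximalideal M R" "Idl {x} \<subseteq> M" using krull[OF I] by blast
    then show False using n genideal_self'[OF x] by (auto simp: MaxSpec_def)
  qed
  then show ?thesis unfolding full_def using ideal.one_imp_carrier[OF I] x by simp
qed

lemma full_not_in: "full R u \<Longrightarrow> M \<in> MaxSpec R \<Longrightarrow> u \<notin> M"
proof
  assume f: "full R u" and M: "M \<in> MaxSpec R" and u: "u \<in> M"
  have "Idl {u} \<subseteq> M" using genideal_minimal[OF mx_ideal[OF M]] u by blast
  then have "\<one> \<in> M" using f unfolding full_def by auto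
  then show False using mx_one M by blast
qed

lemma comax:
  assumes I: "ideal I R" and K: "ideal K R" and n: "\<forall>M\<in>MaxSpec R. \<not> (I \<subseteq> M \<and> K \<subseteq> M)"
  shows "\<exists>x\<in>I. \<exists>y\<in>K. x \<oplus> y = \<one>"
proof -
  have IK: "ideal (set_add R I K) R" by (rule add_ideals[OF I K])
  have sub: "I \<union> K \<subseteq> set_add R I K"
    using genideal_self[of "I \<union> K"] union_genideal[OF I K] ideal.Icarr[OF I] ideal.Icarr[OF K] by blast
  have "\<one> \<in> set_add R I K"
  proof (rule ccontr)
    assume "\<one> \<notin> set_add R I K"
    then obtain M where "maximalideal M R" "set_add R I K \<subseteq> M" using krull[OF IK] by blast
    moreover have "M \<in> MaxSpec R" using calculation by (simp add: MaxSpec_def)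
    ultimately show False using n sub by blast
  qed
  then obtain x y where xy: "x \<in> I" "y \<in> K" "\<one> = x \<oplus> y" unfolding set_add_def' by blast
  then have "x \<oplus> y = \<one>" by simp
  then show ?thesis using xy(1,2) by blast
qed

lemma idem_split:
  assumes e: "e \<in> carrier R" and J: "e \<ominus> e \<otimes> e \<in> jacobson R" and M: "M \<in> MaxSpec R"
  shows "e \<in> M \<longleftrightarrow> \<one> \<ominus> e \<notin> M"
proof -
  have "e \<otimes> (\<one> \<ominus> e) = e \<ominus> e \<otimes> e" using e by algebra
  then have "e \<otimes> (\<one> \<ominus> e) \<in> M" using J M jac_iff by auto
  then have 1: "e \<in> M \<or> \<one> \<ominus> e \<in> M" using mx_prime[OF M] e by auto
  have "\<one> = e \<oplus> (\<one> \<ominus> e)" using e by algebra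
  then have "\<not> (e \<in> M \<and> \<one> \<ominus> e \<in> M)" using mx_add[OF M] mx_one[OF M] by metis
  then show ?thesis using 1 by blast
qed

lemma one_plus_not:
  assumes M: "M \<in> MaxSpec R" and a: "a \<in> carrier R" "c \<in> carrier R" and "a \<in> M" "\<one> \<oplus> a \<otimes> c \<in> M"
  shows False
proof -
  have "a \<otimes> c \<in> M" using mx_multr[OF M] assms by blast
  then have "(\<one> \<oplus> a \<otimes> c) \<ominus> a \<otimes> c \<in> M" using mx_minus[OF M] assms by blast
  moreover have "(\<one> \<oplus> a \<otimes> c) \<ominus> a \<otimes> c = \<one>" using a by algebra
  ultimately show False using mx_one[OF M] by simp
qed

lemma top_MaxTop: "topspace (MaxTop R) = MaxSpec R"
proof -
  have "MaxSpec R - Vmax R (carrier R) = MaxSpec R"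
    unfolding Vmax_def using mx_one one_closed by blast
  then have mem: "MaxSpec R \<in> {MaxSpec R - Vmax R I | I. ideal I R}" using oneideal by blast
  have "\<Union>{MaxSpec R - Vmax R I | I. ideal I R} = MaxSpec R"
  proof (rule antisym)
    show "\<Union>{MaxSpec R - Vmax R I | I. ideal I R} \<subseteq> MaxSpec R" by blast
    show "MaxSpec R \<subseteq> \<Union>{MaxSpec R - Vmax R I | I. ideal I R}" using mem by (rule Union_upper)
  qed
  then show ?thesis unfolding MaxTop_def by (simp only: topology_generated_by_topspace)
qed

lemma open_V: "ideal I R \<Longrightarrow> openin (MaxTop R) (MaxSpec R - Vmax R I)"
proof -
  assume "ideal I R"
  then have "MaxSpec R - Vmax R I \<in> {MaxSpec R - Vmax R I | I. ideal I R}" by blast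
  then show ?thesis unfolding MaxTop_def by (rule topology_generated_by_Basis)
qed

lemma V_Int: assumes I: "ideal I1 R" "ideal I2 R"
  shows "Vmax R (I1 \<inter> I2) = Vmax R I1 \<union> Vmax R I2"
proof
  show "Vmax R I1 \<union> Vmax R I2 \<subseteq> Vmax R (I1 \<inter> I2)" unfolding Vmax_def by blast
  show "Vmax R (I1 \<inter> I2) \<subseteq> Vmax R I1 \<union> Vmax R I2"
  proof
    fix M assume M: "M \<in> Vmax R (I1 \<inter> I2)"
    then have MM: "M \<in> MaxSpec R" and sub: "I1 \<inter> I2 \<subseteq> M" unfolding Vmax_def by auto
    show "M \<in> Vmax R I1 \<union> Vmax R I2"
    proof (rule ccontr)
      assume "M \<notin> Vmax R I1 \<union> Vmax R I2"
      then have "\<not> I1 \<subseteq> M" "\<not> I2 \<subseteq> M" using MM unfolding Vmax_def by auto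
      then obtain x y where x: "x \<in> I1" "x \<notin> M" and y: "y \<in> I2" "y \<notin> M" by blast
      have xc: "x \<in> carrier R" using ideal.Icarr[OF I(1) x(1)] .
      have yc: "y \<in> carrier R" using ideal.Icarr[OF I(2) y(1)] .
      have "x \<otimes> y \<in> I1" using ideal.I_r_closed[OF I(1) x(1) yc] .
      moreover have "x \<otimes> y \<in> I2" using ideal.I_l_closed[OF I(2) y(1) xc] .
      ultimately have "x \<otimes> y \<in> M" using sub by blast
      then show False using mx_prime[OF MM xc yc] x(2) y(2) by blast
    qed
  qed
qed

lemma gen_open:
  "generate_topology_on {MaxSpec R - Vmax R I | I. ideal I R} U \<Longrightarrow> \<exists>I. ideal I R \<and> U = MaxSpec R - Vmax R I"
proof (induction rule: generate_topology_on.induct)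
  case Empty
  have "Vmax R {\<zero>} = MaxSpec R" unfolding Vmax_def using mx_zero by blast
  then have "{} = MaxSpec R - Vmax R {\<zero>}" by simp
  then show ?case using zeroideal by blast
next
  case (Int a b)
  then obtain I1 where I1: "ideal I1 R" "a = MaxSpec R - Vmax R I1" by blast
  obtain I2 where I2: "ideal I2 R" "b = MaxSpec R - Vmax R I2" using Int by blast
  have "a \<inter> b = MaxSpec R - (Vmax R I1 \<union> Vmax R I2)" using I1 I2 by blast
  then have "a \<inter> b = MaxSpec R - Vmax R (I1 \<inter> I2)" using V_Int[OF I1(1) I2(1)] by simp
  then show ?case using i_intersect[OF I1(1) I2(1)] by blast
next
  case (UN K)
  have "\<forall>k\<in>K. \<exists>I. ideal I R \<and> MaxSpec R - Vmax R I = k"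
  proof (intro ballI)
    fix k assume "k \<in> K"
    then have "\<exists>I. ideal I R \<and> k = MaxSpec R - Vmax R I" by (rule UN.IH)
    then show "\<exists>I. ideal I R \<and> MaxSpec R - Vmax R I = k" by (metis (no_types, lifting))
  qed
  from bchoice[OF this] obtain f where f0: "\<forall>k\<in>K. ideal (f k) R \<and> MaxSpec R - Vmax R (f k) = k"
    by (rule exE)
  have fI: "ideal (f k) R" if "k \<in> K" for k using bspec[OF f0 that] by (rule conjunct1)
  have fk: "MaxSpec R - Vmax R (f k) = k" if "k \<in> K" for k using bspec[OF f0 that] by (rule conjunct2)
  define S where "S = (\<Union>k\<in>K. f k)"
  have Sc: "S \<subseteq> carrier R"
  proof
    fix x assume "x \<in> S"
    then obtain k where k: "k \<in> K" "x \<in> f k" unfolding S_def by blast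
    then show "x \<in> carrier R" using ideal.Icarr[OF fI[OF k(1)] k(2)] by simp
  qed
  have Si: "ideal (Idl S) R" using genideal_ideal[OF Sc] .
  have V: "M \<in> Vmax R (Idl S) \<longleftrightarrow> M \<in> MaxSpec R \<and> S \<subseteq> M" for M
  proof (cases "M \<in> MaxSpec R")
    case True
    have "(Idl S \<subseteq> M) = (S \<subseteq> M)" by (rule Idl_subset_ideal[OF mx_ideal[OF True] Sc])
    then show ?thesis using True unfolding Vmax_def by simp
  next
    case False then show ?thesis unfolding Vmax_def by simp
  qed
  have "\<Union>K = MaxSpec R - Vmax R (Idl S)"
  proof (rule Set.set_eqI)
    fix M
    have "M \<in> \<Union>K \<longleftrightarrow> (\<exists>k\<in>K. M \<in> MaxSpec R \<and> \<not> f k \<subseteq> M)"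
    proof
      assume "M \<in> \<Union>K"
      then obtain k where k: "k \<in> K" "M \<in> k" by blast
      then have "M \<in> MaxSpec R - Vmax R (f k)" using fk[OF k(1)] by simp
      then have "M \<in> MaxSpec R \<and> \<not> f k \<subseteq> M" unfolding Vmax_def by simp
      then show "\<exists>k\<in>K. M \<in> MaxSpec R \<and> \<not> f k \<subseteq> M" using k(1) by (rule_tac bexI)
    next
      assume "\<exists>k\<in>K. M \<in> MaxSpec R \<and> \<not> f k \<subseteq> M"
      then obtain k where k: "k \<in> K" "M \<in> MaxSpec R" "\<not> f k \<subseteq> M" by (rule bexE) simp
      then have "M \<in> MaxSpec R - Vmax R (f k)" unfolding Vmax_def by simp
      then have "M \<in> k" using fk[OF k(1)] by simp
      then show "M \<in> \<Union>K" using k(1) by (rule_tac UnionI)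
    qed
    also have "\<dots> \<longleftrightarrow> M \<in> MaxSpec R \<and> \<not> S \<subseteq> M" unfolding S_def UN_subset_iff by blast
    also have "\<dots> \<longleftrightarrow> M \<in> MaxSpec R - Vmax R (Idl S)" using V[of M] by blast
    finally show "M \<in> \<Union>K \<longleftrightarrow> M \<in> MaxSpec R - Vmax R (Idl S)" .
  qed
  then show ?case using Si by blast
next
  case (Basis s)
  then show ?case by blast
qed

lemma closed_iff: "closedin (MaxTop R) A \<longleftrightarrow> (\<exists>I. ideal I R \<and> A = Vmax R I)"
proof
  assume c: "closedin (MaxTop R) A"
  then have o: "openin (MaxTop R) (MaxSpec R - A)" and sub: "A \<subseteq> MaxSpec R"
    unfolding closedin_def top_MaxTop by auto
  have "generate_topology_on {MaxSpec R - Vmax R I | I. ideal I R} (MaxSpec R - A)"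
    using o unfolding MaxTop_def by (rule openin_topology_generated_by)
  then obtain I where I: "ideal I R" "MaxSpec R - A = MaxSpec R - Vmax R I"
    using gen_open by blast
  have "Vmax R I \<subseteq> MaxSpec R" unfolding Vmax_def by blast
  then have "A = Vmax R I" using I(2) sub by blast
  then show "\<exists>I. ideal I R \<and> A = Vmax R I" using I by blast
next
  assume "\<exists>I. ideal I R \<and> A = Vmax R I"
  then obtain I where I: "ideal I R" "A = Vmax R I" by blast
  have sub: "A \<subseteq> MaxSpec R" unfolding I(2) Vmax_def by blast
  have "MaxSpec R - A = MaxSpec R - Vmax R I" using I(2) by simp
  then have "openin (MaxTop R) (MaxSpec R - A)" using open_V[OF I(1)] by simp
  then show "closedin (MaxTop R) A"
    unfolding closedin_def top_MaxTop using sub by simp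
qed

end


definition sepP :: "('a, 'b) ring_scheme \<Rightarrow> bool" where
  "sepP R \<longleftrightarrow> (\<forall>i\<in>carrier R. \<forall>k\<in>carrier R. i \<oplus>\<^bsub>R\<^esub> k = \<one>\<^bsub>R\<^esub> \<longrightarrow>
     (\<exists>e\<in>carrier R. e \<ominus>\<^bsub>R\<^esub> e \<otimes>\<^bsub>R\<^esub> e \<in> jacobson R \<and>
        (\<forall>M\<in>MaxSpec R. i \<in> M \<longrightarrow> e \<notin> M) \<and> (\<forall>M\<in>MaxSpec R. k \<in> M \<longrightarrow> e \<in> M)))"

lemma szD:
  assumes "strongly_zero_dimensional X" "closedin X A" "closedin X B" "A \<inter> B = {}"
  shows "\<exists>C1 C2. closedin X C1 \<and> openin X C1 \<and> closedin X C2 \<and> openin X C2 \<and>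
                 C1 \<inter> C2 = {} \<and> A \<subseteq> C1 \<and> B \<subseteq> C2"
proof -
  have "\<forall>A B. closedin X A \<and> closedin X B \<and> A \<inter> B = {} \<longrightarrow>
        (\<exists>C1 C2. closedin X C1 \<and> openin X C1 \<and> closedin X C2 \<and> openin X C2 \<and>
                 C1 \<inter> C2 = {} \<and> A \<subseteq> C1 \<and> B \<subseteq> C2)"
    using assms(1) unfolding strongly_zero_dimensional_def .
  then show ?thesis using assms(2-4) by (elim allE impE) (rule conjI; simp)+
qed

context cring begin

lemma sepD:
  assumes "sepP R" "i \<in> carrier R" "k \<in> carrier R" "i \<oplus> k = \<one>"
  obtains e where "e \<in> carrier R" "e \<ominus> e \<otimes> e \<in> jacobson R"
    "\<And>M. M \<in> MaxSpec R \<Longrightarrow> i \<in> M \<Longrightarrow> e \<notin> M" "\<And>M. M \<in> MaxSpec R \<Longrightarrow> k \<in> M \<Longrightarrow> e \<in> M"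
proof -
  have h: "\<forall>i\<in>carrier R. \<forall>k\<in>carrier R. i \<oplus> k = \<one> \<longrightarrow>
     (\<exists>e\<in>carrier R. e \<ominus> e \<otimes> e \<in> jacobson R \<and>
        (\<forall>M\<in>MaxSpec R. i \<in> M \<longrightarrow> e \<notin> M) \<and> (\<forall>M\<in>MaxSpec R. k \<in> M \<longrightarrow> e \<in> M))"
    using assms(1) unfolding sepP_def .
  have "\<exists>e\<in>carrier R. e \<ominus> e \<otimes> e \<in> jacobson R \<and>
        (\<forall>M\<in>MaxSpec R. i \<in> M \<longrightarrow> e \<notin> M) \<and> (\<forall>M\<in>MaxSpec R. k \<in> M \<longrightarrow> e \<in> M)"
    using mp[OF bspec[OF bspec[OF h assms(2)] assms(3)] assms(4)] .
  then obtain e where e: "e \<in> carrier R" "e \<ominus> e \<otimes> e \<in> jacobson R"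
     "\<forall>M\<in>MaxSpec R. i \<in> M \<longrightarrow> e \<notin> M" "\<forall>M\<in>MaxSpec R. k \<in> M \<longrightarrow> e \<in> M"
    by (elim bexE conjE) (rule that, assumption+)
  show ?thesis
  proof (rule that[OF e(1) e(2)])
    show "\<And>M. M \<in> MaxSpec R \<Longrightarrow> i \<in> M \<Longrightarrow> e \<notin> M" using e(3) by blast
    show "\<And>M. M \<in> MaxSpec R \<Longrightarrow> k \<in> M \<Longrightarrow> e \<in> M" using e(4) by blast
  qed
qed

lemma SZ_imp_sep:
  assumes SZ: "strongly_zero_dimensional (MaxTop R)" shows "sepP R"
  unfolding sepP_def
proof (intro ballI impI)
  fix i k assume i: "i \<in> carrier R" and k: "k \<in> carrier R" and ik: "i \<oplus> k = \<one>"
  define A where "A = Vmax R (PIdl i)"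
  define B where "B = Vmax R (PIdl k)"
  have cA: "closedin (MaxTop R) A" unfolding A_def closed_iff using cgenideal_ideal[OF i] by blast
  have cB: "closedin (MaxTop R) B" unfolding B_def closed_iff using cgenideal_ideal[OF k] by blast
  have Ai: "M \<in> A \<longleftrightarrow> M \<in> MaxSpec R \<and> i \<in> M" for M unfolding A_def V_PIdl[OF i] by simp
  have Bk: "M \<in> B \<longleftrightarrow> M \<in> MaxSpec R \<and> k \<in> M" for M unfolding B_def V_PIdl[OF k] by simp
  have AB: "A \<inter> B = {}"
  proof (rule ccontr)
    assume "A \<inter> B \<noteq> {}" then obtain M where "M \<in> A" "M \<in> B" by blast
    then have M: "M \<in> MaxSpec R" "i \<in> M" "k \<in> M" using Ai Bk by auto
    then have "i \<oplus> k \<in> M" using mx_add by blast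
    then show False using ik mx_one[OF M(1)] by simp
  qed
  have "\<exists>C1 C2. closedin (MaxTop R) C1 \<and> openin (MaxTop R) C1 \<and> closedin (MaxTop R) C2 \<and> openin (MaxTop R) C2 \<and>
                 C1 \<inter> C2 = {} \<and> A \<subseteq> C1 \<and> B \<subseteq> C2"
    by (rule szD[OF SZ cA cB AB])
  then obtain C1 C2 where C: "closedin (MaxTop R) C1" "openin (MaxTop R) C1" "closedin (MaxTop R) C2"
      "openin (MaxTop R) C2" "C1 \<inter> C2 = {}" "A \<subseteq> C1" "B \<subseteq> C2" by blast
  obtain I where I: "ideal I R" "C1 = Vmax R I" using C(1) closed_iff by blast
  have "closedin (MaxTop R) (topspace (MaxTop R) - C1)" using closedin_diff[OF closedin_topspace C(2)] .
  then have "closedin (MaxTop R) (MaxSpec R - C1)" using top_MaxTop by simp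
  then obtain K where K: "ideal K R" "MaxSpec R - C1 = Vmax R K" using closed_iff by blast
  have n: "\<forall>M\<in>MaxSpec R. \<not> (I \<subseteq> M \<and> K \<subseteq> M)"
  proof (intro ballI notI)
    fix M assume M: "M \<in> MaxSpec R" "I \<subseteq> M \<and> K \<subseteq> M"
    then have "M \<in> Vmax R I" "M \<in> Vmax R K" unfolding Vmax_def by auto
    then have "M \<in> C1" "M \<in> MaxSpec R - C1" using I(2) K(2) by auto
    then show False by simp
  qed
  obtain x y where xy: "x \<in> I" "y \<in> K" "x \<oplus> y = \<one>" using comax[OF I(1) K(1) n] by blast
  have xc: "x \<in> carrier R" using ideal.Icarr[OF I(1) xy(1)] .
  have yc: "y \<in> carrier R" using ideal.Icarr[OF K(1) xy(2)] .
  have cover: "I \<subseteq> M \<or> K \<subseteq> M" if M: "M \<in> MaxSpec R" for M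
  proof (cases "M \<in> C1")
    case True then have "M \<in> Vmax R I" using I(2) by simp
    then show ?thesis unfolding Vmax_def by simp
  next
    case False then have "M \<in> Vmax R K" using K(2) M by blast
    then show ?thesis unfolding Vmax_def by simp
  qed
  have x1: "x = (x \<oplus> y) \<ominus> y" using xc yc by algebra
  have x2: "x = \<one> \<ominus> y" using x1 xy(3) by simp
  have eq: "y \<ominus> y \<otimes> y = y \<otimes> (\<one> \<ominus> y)" using yc by algebra
  have eJ: "y \<ominus> y \<otimes> y \<in> jacobson R"
    unfolding jac_iff
  proof (intro conjI ballI)
    show "y \<ominus> y \<otimes> y \<in> carrier R" using yc by simp
    fix M assume M: "M \<in> MaxSpec R"
    have "y \<otimes> x \<in> M"
    proof (cases "I \<subseteq> M")
      case True then show ?thesis using mx_multl[OF M _ yc] xy(1) by blast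
    next
      case False then have "K \<subseteq> M" using cover[OF M] by blast
      then show ?thesis using mx_multr[OF M _ xc] xy(2) by blast
    qed
    then show "y \<ominus> y \<otimes> y \<in> M" using eq x2 by simp
  qed
  show "\<exists>e\<in>carrier R. e \<ominus> e \<otimes> e \<in> jacobson R \<and>
        (\<forall>M\<in>MaxSpec R. i \<in> M \<longrightarrow> e \<notin> M) \<and> (\<forall>M\<in>MaxSpec R. k \<in> M \<longrightarrow> e \<in> M)"
  proof (intro bexI conjI ballI impI)
    show "y \<in> carrier R" by (rule yc)
    show "y \<ominus> y \<otimes> y \<in> jacobson R" by (rule eJ)
    fix M assume M: "M \<in> MaxSpec R"
    {
      assume "i \<in> M"
      then have "M \<in> C1" using C(6) Ai M by blast
      then have "I \<subseteq> M" using I(2) unfolding Vmax_def by simp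
      then have xM: "x \<in> M" using xy(1) by blast
      show "y \<notin> M"
      proof
        assume "y \<in> M"
        then have "x \<oplus> y \<in> M" using mx_add[OF M xM] by blast
        then show False using xy(3) mx_one[OF M] by simp
      qed
    }
    {
      assume "k \<in> M"
      then have "M \<in> C2" using C(7) Bk M by blast
      then have "M \<notin> C1" using C(5) by blast
      then have "M \<in> Vmax R K" using K(2) M by blast
      then have "K \<subseteq> M" unfolding Vmax_def by simp
      then show "y \<in> M" using xy(2) by blast
    }
  qed
qed

lemma sep_imp_SZ:
  assumes S: "sepP R" shows "strongly_zero_dimensional (MaxTop R)"
  unfolding strongly_zero_dimensional_def
proof (intro allI impI)
  fix A B assume H: "closedin (MaxTop R) A \<and> closedin (MaxTop R) B \<and> A \<inter> B = {}"
  obtain I where I: "ideal I R" "A = Vmax R I" using H closed_iff by blast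
  obtain K where K: "ideal K R" "B = Vmax R K" using H closed_iff by blast
  have n: "\<forall>M\<in>MaxSpec R. \<not> (I \<subseteq> M \<and> K \<subseteq> M)"
  proof (intro ballI notI)
    fix M assume M: "M \<in> MaxSpec R" "I \<subseteq> M \<and> K \<subseteq> M"
    then have "M \<in> Vmax R I" "M \<in> Vmax R K" unfolding Vmax_def by auto
    then have "M \<in> A \<inter> B" using I(2) K(2) by simp
    then show False using H by simp
  qed
  obtain x y where xy: "x \<in> I" "y \<in> K" "x \<oplus> y = \<one>" using comax[OF I(1) K(1) n] by blast
  have xc: "x \<in> carrier R" using ideal.Icarr[OF I(1) xy(1)] .
  have yc: "y \<in> carrier R" using ideal.Icarr[OF K(1) xy(2)] .
  obtain e where e: "e \<in> carrier R" "e \<ominus> e \<otimes> e \<in> jacobson R"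
    "\<And>M. M \<in> MaxSpec R \<Longrightarrow> x \<in> M \<Longrightarrow> e \<notin> M" "\<And>M. M \<in> MaxSpec R \<Longrightarrow> y \<in> M \<Longrightarrow> e \<in> M"
    using sepD[OF S xc yc xy(3)] by blast
  have ec: "\<one> \<ominus> e \<in> carrier R" using e(1) by simp
  define C1 where "C1 = Vmax R (PIdl (\<one> \<ominus> e))"
  define C2 where "C2 = Vmax R (PIdl e)"
  have C1m: "M \<in> C1 \<longleftrightarrow> M \<in> MaxSpec R \<and> e \<notin> M" for M
    unfolding C1_def V_PIdl[OF ec] using idem_split[OF e(1) e(2)] by blast
  have C2m: "M \<in> C2 \<longleftrightarrow> M \<in> MaxSpec R \<and> e \<in> M" for M
    unfolding C2_def V_PIdl[OF e(1)] by simp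
  have C1e: "C1 = MaxSpec R - C2" using C1m C2m by blast
  have C2e: "C2 = MaxSpec R - C1" using C1m C2m by blast
  show "\<exists>C1 C2. closedin (MaxTop R) C1 \<and> openin (MaxTop R) C1 \<and> closedin (MaxTop R) C2 \<and> openin (MaxTop R) C2 \<and>
                 C1 \<inter> C2 = {} \<and> A \<subseteq> C1 \<and> B \<subseteq> C2"
  proof (intro exI conjI)
    show "closedin (MaxTop R) C1" unfolding C1_def closed_iff using cgenideal_ideal[OF ec] by blast
    show "closedin (MaxTop R) C2" unfolding C2_def closed_iff using cgenideal_ideal[OF e(1)] by blast
    show "openin (MaxTop R) C1" unfolding C1e C2_def using open_V[OF cgenideal_ideal[OF e(1)]] .
    show "openin (MaxTop R) C2" unfolding C2e C1_def using open_V[OF cgenideal_ideal[OF ec]] .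
    show "C1 \<inter> C2 = {}" using C1m C2m by blast
    show "A \<subseteq> C1"
    proof
      fix M assume "M \<in> A"
      then have M: "M \<in> MaxSpec R" "I \<subseteq> M" using I(2) unfolding Vmax_def by auto
      then have "e \<notin> M" using e(3) xy(1) by blast
      then show "M \<in> C1" using C1m M(1) by simp
    qed
    show "B \<subseteq> C2"
    proof
      fix M assume "M \<in> B"
      then have M: "M \<in> MaxSpec R" "K \<subseteq> M" using K(2) unfolding Vmax_def by auto
      then have "e \<in> M" using e(4) xy(2) by blast
      then show "M \<in> C2" using C2m M(1) by simp
    qed
  qed
qed

lemma V_single: assumes M: "M \<in> MaxSpec R" shows "Vmax R M = {M}"
proof
  show "{M} \<subseteq> Vmax R M" using M unfolding Vmax_def by simp
  show "Vmax R M \<subseteq> {M}"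
  proof
    fix P assume "P \<in> Vmax R M"
    then have P: "P \<in> MaxSpec R" "M \<subseteq> P" unfolding Vmax_def by auto
    have "P \<subseteq> carrier R" using mx_carr[OF P(1)] by blast
    then have "P = M \<or> P = carrier R"
      by (rule maximalideal.I_maximal[OF mx[OF M] mx_ideal[OF P(1)] P(2)])
    moreover have "P \<noteq> carrier R" using mx_one[OF P(1)] by blast
    ultimately show "P \<in> {M}" by simp
  qed
qed

lemma SZ_imp_H:
  assumes SZ: "strongly_zero_dimensional (MaxTop R)" shows "Hausdorff_space (MaxTop R)"
  unfolding Hausdorff_space_def top_MaxTop
proof (intro allI impI)
  fix M N assume H: "M \<in> MaxSpec R \<and> N \<in> MaxSpec R \<and> M \<noteq> N"
  have MM: "M \<in> MaxSpec R" and NN: "N \<in> MaxSpec R" using H by simp_all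
  have cM: "closedin (MaxTop R) {M}" unfolding closed_iff
    by (rule exI[of _ M], rule conjI[OF mx_ideal[OF MM] V_single[OF MM, symmetric]])
  have cN: "closedin (MaxTop R) {N}" unfolding closed_iff
    by (rule exI[of _ N], rule conjI[OF mx_ideal[OF NN] V_single[OF NN, symmetric]])
  have d: "{M} \<inter> {N} = {}" using H by simp
  have "\<exists>C1 C2. closedin (MaxTop R) C1 \<and> openin (MaxTop R) C1 \<and> closedin (MaxTop R) C2 \<and> openin (MaxTop R) C2 \<and>
                 C1 \<inter> C2 = {} \<and> {M} \<subseteq> C1 \<and> {N} \<subseteq> C2"
    by (rule szD[OF SZ cM cN d])
  then obtain C1 C2 where C: "openin (MaxTop R) C1" "openin (MaxTop R) C2" "C1 \<inter> C2 = {}" "{M} \<subseteq> C1" "{N} \<subseteq> C2"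
    by blast
  show "\<exists>U V. openin (MaxTop R) U \<and> openin (MaxTop R) V \<and> M \<in> U \<and> N \<in> V \<and> disjnt U V"
  proof (intro exI conjI)
    show "openin (MaxTop R) C1" "openin (MaxTop R) C2" by (fact C(1), fact C(2))
    show "M \<in> C1" "N \<in> C2" using C(4,5) by simp_all
    show "disjnt C1 C2" unfolding disjnt_def by (fact C(3))
  qed
qed

end


context cring begin

lemma F_imp_sep:
  assumes F: "feckly_clean R" shows "sepP R"
  unfolding sepP_def
proof (intro ballI impI)
  fix i k assume i: "i \<in> carrier R" and k: "k \<in> carrier R" and ik: "i \<oplus> k = \<one>"
  have "feckly_clean_elem R i" using F i unfolding feckly_clean_def by (rule bspec)
  then obtain e u where e: "e \<in> carrier R" and u: "u \<in> carrier R" and fu: "full R u" and iu: "i = e \<oplus> u"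
    and sub: "{e \<otimes> r \<otimes> (\<one> \<ominus> e) | r. r \<in> carrier R} \<subseteq> jacobson R"
    unfolding feckly_clean_elem_def by (elim bexE conjE) (rule that, assumption+)
  have "e \<otimes> \<one> \<otimes> (\<one> \<ominus> e) \<in> {e \<otimes> r \<otimes> (\<one> \<ominus> e) | r. r \<in> carrier R}"
    using one_closed by blast
  then have "e \<otimes> \<one> \<otimes> (\<one> \<ominus> e) \<in> jacobson R" using sub by (rule subsetD[rotated])
  moreover have "e \<otimes> \<one> \<otimes> (\<one> \<ominus> e) = e \<ominus> e \<otimes> e" using e by algebra
  ultimately have eJ: "e \<ominus> e \<otimes> e \<in> jacobson R" by simp
  show "\<exists>e\<in>carrier R. e \<ominus> e \<otimes> e \<in> jacobson R \<and>
        (\<forall>M\<in>MaxSpec R. i \<in> M \<longrightarrow> e \<notin> M) \<and> (\<forall>M\<in>MaxSpec R. k \<in> M \<longrightarrow> e \<in> M)"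
  proof (intro bexI conjI ballI impI)
    show "e \<in> carrier R" by (rule e)
    show "e \<ominus> e \<otimes> e \<in> jacobson R" by (rule eJ)
    fix M assume M: "M \<in> MaxSpec R"
    {
      assume iM: "i \<in> M"
      show "e \<notin> M"
      proof
        assume eM: "e \<in> M"
        have "u = (e \<oplus> u) \<ominus> e" using e u by algebra
        then have "u = i \<ominus> e" using iu by simp
        then have "u \<in> M" using mx_minus[OF M iM eM] by simp
        then show False using full_not_in[OF fu M] by simp
      qed
    }
    {
      assume kM: "k \<in> M"
      show "e \<in> M"
      proof (rule ccontr)
        assume "e \<notin> M"
        then have eM: "\<one> \<ominus> e \<in> M" using idem_split[OF e eJ M] by simp
        have "u = ((e \<oplus> u) \<oplus> k \<ominus> e) \<ominus> k" using e u k by algebra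
        then have "u = (i \<oplus> k \<ominus> e) \<ominus> k" using iu by simp
        then have "u = (\<one> \<ominus> e) \<ominus> k" using ik by simp
        then have "u \<in> M" using mx_minus[OF M eM kM] by simp
        then show False using full_not_in[OF fu M] by simp
      qed
    }
  qed
qed

lemma sep_imp_F:
  assumes S: "sepP R" shows "feckly_clean R"
  unfolding feckly_clean_def
proof
  fix a assume a: "a \<in> carrier R"
  have ac: "\<one> \<ominus> a \<in> carrier R" using a by simp
  have na: "a \<oplus> (\<one> \<ominus> a) = \<one>" using a by algebra
  obtain e where e: "e \<in> carrier R" "e \<ominus> e \<otimes> e \<in> jacobson R"
    "\<And>M. M \<in> MaxSpec R \<Longrightarrow> a \<in> M \<Longrightarrow> e \<notin> M" "\<And>M. M \<in> MaxSpec R \<Longrightarrow> \<one> \<ominus> a \<in> M \<Longrightarrow> e \<in> M"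
    using sepD[OF S a ac na] by blast
  define u where "u = a \<ominus> e"
  have uc: "u \<in> carrier R" unfolding u_def using a e(1) by simp
  have fu: "full R u"
  proof (rule not_in_max_full[OF uc], intro ballI notI)
    fix M assume M: "M \<in> MaxSpec R" and uM: "u \<in> M"
    show False
    proof (cases "e \<in> M")
      case True
      have "a = u \<oplus> e" unfolding u_def using a e(1) by algebra
      then have "a \<in> M" using mx_add[OF M uM True] by simp
      then show False using e(3)[OF M] True by blast
    next
      case False
      then have eM: "\<one> \<ominus> e \<in> M" using idem_split[OF e(1) e(2) M] by simp
      have "\<one> \<ominus> a = (\<one> \<ominus> e) \<ominus> u" unfolding u_def using a e(1) by algebra
      then have "\<one> \<ominus> a \<in> M" using mx_minus[OF M eM uM] by simp
      then show False using e(4)[OF M] False by blast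
    qed
  qed
  have aeu: "a = e \<oplus> u" unfolding u_def using a e(1) by algebra
  have sub: "{e \<otimes> r \<otimes> (\<one> \<ominus> e) | r. r \<in> carrier R} \<subseteq> jacobson R"
  proof
    fix z assume "z \<in> {e \<otimes> r \<otimes> (\<one> \<ominus> e) | r. r \<in> carrier R}"
    then obtain r where r: "r \<in> carrier R" and z: "z = e \<otimes> r \<otimes> (\<one> \<ominus> e)" by blast
    have z2: "z = r \<otimes> (e \<ominus> e \<otimes> e)" unfolding z using r e(1) by algebra
    show "z \<in> jacobson R"
      unfolding jac_iff
    proof (intro conjI ballI)
      show "z \<in> carrier R" unfolding z2 using r e(1) by simp
      fix M assume M: "M \<in> MaxSpec R"
      have "e \<ominus> e \<otimes> e \<in> M" using e(2) M unfolding jac_iff by blast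
      then show "z \<in> M" unfolding z2 using mx_multl[OF M _ r] by blast
    qed
  qed
  show "feckly_clean_elem R a"
    unfolding feckly_clean_elem_def
    by (rule bexI[OF _ e(1)], rule bexI[OF _ uc], intro conjI, fact fu, fact aeu, fact sub)
qed

lemma E_imp_sep:
  assumes E: "\<forall>a \<in> carrier R. \<forall>b \<in> carrier R. a \<oplus> b = \<one> \<longrightarrow>
               (\<exists>r \<in> carrier R. \<exists>s \<in> carrier R. \<exists>e \<in> carrier R.
                  \<one> \<oplus> a \<otimes> r \<in> {e \<otimes> x | x. x \<in> carrier R} \<and>
                  \<one> \<oplus> b \<otimes> s \<in> {(\<one> \<ominus> e) \<otimes> x | x. x \<in> carrier R} \<and>
                  e \<ominus> e \<otimes> e \<in> jacobson R)"
  shows "sepP R"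
  unfolding sepP_def
proof (intro ballI impI)
  fix i k assume i: "i \<in> carrier R" and k: "k \<in> carrier R" and ik: "i \<oplus> k = \<one>"
  have "\<exists>r \<in> carrier R. \<exists>s \<in> carrier R. \<exists>e \<in> carrier R.
                  \<one> \<oplus> i \<otimes> r \<in> {e \<otimes> x | x. x \<in> carrier R} \<and>
                  \<one> \<oplus> k \<otimes> s \<in> {(\<one> \<ominus> e) \<otimes> x | x. x \<in> carrier R} \<and>
                  e \<ominus> e \<otimes> e \<in> jacobson R"
    using mp[OF bspec[OF bspec[OF E i] k] ik] .
  then obtain r s e where r: "r \<in> carrier R" and s: "s \<in> carrier R" and e: "e \<in> carrier R"
    and m1: "\<one> \<oplus> i \<otimes> r \<in> {e \<otimes> x | x. x \<in> carrier R}"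
    and m2: "\<one> \<oplus> k \<otimes> s \<in> {(\<one> \<ominus> e) \<otimes> x | x. x \<in> carrier R}"
    and eJ: "e \<ominus> e \<otimes> e \<in> jacobson R"
    by (elim bexE conjE) (rule that, assumption+)
  obtain x where x: "x \<in> carrier R" "\<one> \<oplus> i \<otimes> r = e \<otimes> x" using m1 by blast
  obtain y where y: "y \<in> carrier R" "\<one> \<oplus> k \<otimes> s = (\<one> \<ominus> e) \<otimes> y" using m2 by blast
  show "\<exists>e\<in>carrier R. e \<ominus> e \<otimes> e \<in> jacobson R \<and>
        (\<forall>M\<in>MaxSpec R. i \<in> M \<longrightarrow> e \<notin> M) \<and> (\<forall>M\<in>MaxSpec R. k \<in> M \<longrightarrow> e \<in> M)"
  proof (intro bexI conjI ballI impI)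
    show "e \<in> carrier R" by (rule e)
    show "e \<ominus> e \<otimes> e \<in> jacobson R" by (rule eJ)
    fix M assume M: "M \<in> MaxSpec R"
    {
      assume iM: "i \<in> M"
      show "e \<notin> M"
      proof
        assume eM: "e \<in> M"
        have "e \<otimes> x \<in> M" using mx_multr[OF M eM x(1)] .
        then have "\<one> \<oplus> i \<otimes> r \<in> M" using x(2) by simp
        then show False using one_plus_not[OF M i r iM] by simp
      qed
    }
    {
      assume kM: "k \<in> M"
      show "e \<in> M"
      proof (rule ccontr)
        assume "e \<notin> M"
        then have eM: "\<one> \<ominus> e \<in> M" using idem_split[OF e eJ M] by simp
        have "(\<one> \<ominus> e) \<otimes> y \<in> M" using mx_multr[OF M eM y(1)] .
        then have "\<one> \<oplus> k \<otimes> s \<in> M" using y(2) by simp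
        then show False using one_plus_not[OF M k s kM] by simp
      qed
    }
  qed
qed

lemma principal_comb:
  assumes a: "a \<in> carrier R" and c: "c \<in> carrier R"
    and n: "\<And>M. M \<in> MaxSpec R \<Longrightarrow> a \<in> M \<Longrightarrow> c \<in> M \<Longrightarrow> False"
  shows "\<exists>r\<in>carrier R. \<one> \<oplus> a \<otimes> r \<in> {c \<otimes> x | x. x \<in> carrier R}"
proof -
  have n': "\<forall>M\<in>MaxSpec R. \<not> (PIdl a \<subseteq> M \<and> PIdl c \<subseteq> M)"
  proof (intro ballI notI)
    fix M assume M: "M \<in> MaxSpec R" "PIdl a \<subseteq> M \<and> PIdl c \<subseteq> M"
    then have "a \<in> M" "c \<in> M" using cgenideal_self[OF a] cgenideal_self[OF c] by blast+
    then show False using n[OF M(1)] by blast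
  qed
  obtain p q where pq: "p \<in> PIdl a" "q \<in> PIdl c" "p \<oplus> q = \<one>"
    using comax[OF cgenideal_ideal[OF a] cgenideal_ideal[OF c] n'] by blast
  obtain x' where x': "x' \<in> carrier R" "p = x' \<otimes> a" using pq(1) unfolding cgenideal_def by blast
  obtain y' where y': "y' \<in> carrier R" "q = y' \<otimes> c" using pq(2) unfolding cgenideal_def by blast
  have "(x' \<otimes> a \<oplus> y' \<otimes> c) \<oplus> a \<otimes> (\<ominus> x') = c \<otimes> y'" using a c x'(1) y'(1) by algebra
  then have "\<one> \<oplus> a \<otimes> (\<ominus> x') = c \<otimes> y'" using pq(3) x'(2) y'(2) by simp
  then have "\<one> \<oplus> a \<otimes> (\<ominus> x') \<in> {c \<otimes> x | x. x \<in> carrier R}" using y'(1) by blast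
  moreover have "\<ominus> x' \<in> carrier R" using x'(1) by simp
  ultimately show ?thesis by (rule_tac bexI)
qed

lemma sep_imp_E:
  assumes S: "sepP R"
  shows "\<forall>a \<in> carrier R. \<forall>b \<in> carrier R. a \<oplus> b = \<one> \<longrightarrow>
               (\<exists>r \<in> carrier R. \<exists>s \<in> carrier R. \<exists>e \<in> carrier R.
                  \<one> \<oplus> a \<otimes> r \<in> {e \<otimes> x | x. x \<in> carrier R} \<and>
                  \<one> \<oplus> b \<otimes> s \<in> {(\<one> \<ominus> e) \<otimes> x | x. x \<in> carrier R} \<and>
                  e \<ominus> e \<otimes> e \<in> jacobson R)"
proof (intro ballI impI)
  fix a b assume a: "a \<in> carrier R" and b: "b \<in> carrier R" and ab: "a \<oplus> b = \<one>"
  obtain e where e: "e \<in> carrier R" "e \<ominus> e \<otimes> e \<in> jacobson R"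
    "\<And>M. M \<in> MaxSpec R \<Longrightarrow> a \<in> M \<Longrightarrow> e \<notin> M" "\<And>M. M \<in> MaxSpec R \<Longrightarrow> b \<in> M \<Longrightarrow> e \<in> M"
    using sepD[OF S a b ab] by blast
  have ec: "\<one> \<ominus> e \<in> carrier R" using e(1) by simp
  obtain r where r: "r \<in> carrier R" "\<one> \<oplus> a \<otimes> r \<in> {e \<otimes> x | x. x \<in> carrier R}"
    using principal_comb[OF a e(1)] e(3) by blast
  have "\<exists>s\<in>carrier R. \<one> \<oplus> b \<otimes> s \<in> {(\<one> \<ominus> e) \<otimes> x | x. x \<in> carrier R}"
  proof (rule principal_comb[OF b ec])
    fix M assume M: "M \<in> MaxSpec R" "b \<in> M" "\<one> \<ominus> e \<in> M"
    then have "e \<in> M" using e(4) by blast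
    then show False using idem_split[OF e(1) e(2) M(1)] M(3) by simp
  qed
  then obtain s where s: "s \<in> carrier R" "\<one> \<oplus> b \<otimes> s \<in> {(\<one> \<ominus> e) \<otimes> x | x. x \<in> carrier R}"
    by (rule bexE)
  show "\<exists>r \<in> carrier R. \<exists>s \<in> carrier R. \<exists>e \<in> carrier R.
                  \<one> \<oplus> a \<otimes> r \<in> {e \<otimes> x | x. x \<in> carrier R} \<and>
                  \<one> \<oplus> b \<otimes> s \<in> {(\<one> \<ominus> e) \<otimes> x | x. x \<in> carrier R} \<and>
                  e \<ominus> e \<otimes> e \<in> jacobson R"
    by (rule bexI[OF _ r(1)], rule bexI[OF _ s(1)], rule bexI[OF _ e(1)], intro conjI, fact r(2), fact s(2), fact e(2))
qed

lemma E_imp_P: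
  assumes E: "\<forall>a \<in> carrier R. \<forall>b \<in> carrier R. a \<oplus> b = \<one> \<longrightarrow>
               (\<exists>r \<in> carrier R. \<exists>s \<in> carrier R. \<exists>e \<in> carrier R.
                  \<one> \<oplus> a \<otimes> r \<in> {e \<otimes> x | x. x \<in> carrier R} \<and>
                  \<one> \<oplus> b \<otimes> s \<in> {(\<one> \<ominus> e) \<otimes> x | x. x \<in> carrier R} \<and>
                  e \<ominus> e \<otimes> e \<in> jacobson R)"
  shows "\<forall>a \<in> carrier R. \<forall>b \<in> carrier R. a \<oplus> b = \<one> \<longrightarrow>
               (\<exists>r \<in> carrier R. \<exists>s \<in> carrier R.
                  (\<one> \<oplus> a \<otimes> r) \<otimes> (\<one> \<oplus> b \<otimes> s) \<in> jacobson R)"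
proof (intro ballI impI)
  fix i k assume i: "i \<in> carrier R" and k: "k \<in> carrier R" and ik: "i \<oplus> k = \<one>"
  have "\<exists>r \<in> carrier R. \<exists>s \<in> carrier R. \<exists>e \<in> carrier R.
                  \<one> \<oplus> i \<otimes> r \<in> {e \<otimes> x | x. x \<in> carrier R} \<and>
                  \<one> \<oplus> k \<otimes> s \<in> {(\<one> \<ominus> e) \<otimes> x | x. x \<in> carrier R} \<and>
                  e \<ominus> e \<otimes> e \<in> jacobson R"
    using mp[OF bspec[OF bspec[OF E i] k] ik] .
  then obtain r s e where r: "r \<in> carrier R" and s: "s \<in> carrier R" and e: "e \<in> carrier R"
    and m1: "\<one> \<oplus> i \<otimes> r \<in> {e \<otimes> x | x. x \<in> carrier R}"
    and m2: "\<one> \<oplus> k \<otimes> s \<in> {(\<one> \<ominus> e) \<otimes> x | x. x \<in> carrier R}"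
    and eJ: "e \<ominus> e \<otimes> e \<in> jacobson R"
    by (elim bexE conjE) (rule that, assumption+)
  obtain x where x: "x \<in> carrier R" "\<one> \<oplus> i \<otimes> r = e \<otimes> x" using m1 by blast
  obtain y where y: "y \<in> carrier R" "\<one> \<oplus> k \<otimes> s = (\<one> \<ominus> e) \<otimes> y" using m2 by blast
  have "(e \<otimes> x) \<otimes> ((\<one> \<ominus> e) \<otimes> y) = (e \<ominus> e \<otimes> e) \<otimes> (x \<otimes> y)" using e x(1) y(1) by algebra
  then have eq: "(\<one> \<oplus> i \<otimes> r) \<otimes> (\<one> \<oplus> k \<otimes> s) = (e \<ominus> e \<otimes> e) \<otimes> (x \<otimes> y)" using x(2) y(2) by simp
  have "(e \<ominus> e \<otimes> e) \<otimes> (x \<otimes> y) \<in> jacobson R"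
    unfolding jac_iff
  proof (intro conjI ballI)
    show "(e \<ominus> e \<otimes> e) \<otimes> (x \<otimes> y) \<in> carrier R" using e x(1) y(1) by simp
    fix M assume M: "M \<in> MaxSpec R"
    have "e \<ominus> e \<otimes> e \<in> M" using eJ M unfolding jac_iff by blast
    then show "(e \<ominus> e \<otimes> e) \<otimes> (x \<otimes> y) \<in> M" using mx_multr[OF M] x(1) y(1) by simp
  qed
  then have "(\<one> \<oplus> i \<otimes> r) \<otimes> (\<one> \<oplus> k \<otimes> s) \<in> jacobson R" using eq by simp
  then show "\<exists>r \<in> carrier R. \<exists>s \<in> carrier R. (\<one> \<oplus> i \<otimes> r) \<otimes> (\<one> \<oplus> k \<otimes> s) \<in> jacobson R"
    using r s by blast
qed

end

lemma prop_comb: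
  "(F \<longleftrightarrow> S) \<Longrightarrow> (Z \<longleftrightarrow> S) \<Longrightarrow> (S \<Longrightarrow> H) \<Longrightarrow> (E \<longleftrightarrow> S) \<Longrightarrow> (E \<Longrightarrow> P) \<Longrightarrow>
   (F \<longleftrightarrow> Z \<and> H) \<and> (Z \<and> H \<longleftrightarrow> Z \<and> P) \<and> (Z \<and> P \<longleftrightarrow> E)"
  by blast

theorem theorem5p4:
  fixes R (structure)
  assumes "cring R"
  shows "(feckly_clean R \<longleftrightarrow>
            strongly_zero_dimensional (MaxTop R) \<and> Hausdorff_space (MaxTop R))
       \<and> (strongly_zero_dimensional (MaxTop R) \<and> Hausdorff_space (MaxTop R) \<longleftrightarrow>
            strongly_zero_dimensional (MaxTop R) \<and>
            (\<forall>a \<in> carrier R. \<forall>b \<in> carrier R. a \<oplus> b = \<one> \<longrightarrow>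
               (\<exists>r \<in> carrier R. \<exists>s \<in> carrier R.
                  (\<one> \<oplus> a \<otimes> r) \<otimes> (\<one> \<oplus> b \<otimes> s) \<in> jacobson R)))
       \<and> (strongly_zero_dimensional (MaxTop R) \<and>
            (\<forall>a \<in> carrier R. \<forall>b \<in> carrier R. a \<oplus> b = \<one> \<longrightarrow>
               (\<exists>r \<in> carrier R. \<exists>s \<in> carrier R.
                  (\<one> \<oplus> a \<otimes> r) \<otimes> (\<one> \<oplus> b \<otimes> s) \<in> jacobson R))
          \<longleftrightarrow>
            (\<forall>a \<in> carrier R. \<forall>b \<in> carrier R. a \<oplus> b = \<one> \<longrightarrow>
               (\<exists>r \<in> carrier R. \<exists>s \<in> carrier R. \<exists>e \<in> carrier R.
                  \<one> \<oplus> a \<otimes> r \<in> {e \<otimes> x | x. x \<in> carrier R} \<and>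
                  \<one> \<oplus> b \<otimes> s \<in> {(\<one> \<ominus> e) \<otimes> x | x. x \<in> carrier R} \<and>
                  e \<ominus> e \<otimes> e \<in> jacobson R)))"
proof -
  interpret cring R by (rule assms)
  show ?thesis
    by (rule prop_comb[OF iffI[OF F_imp_sep sep_imp_F] iffI[OF SZ_imp_sep sep_imp_SZ]
          SZ_imp_H[OF sep_imp_SZ] iffI[OF E_imp_sep sep_imp_E] E_imp_P])
qed

end
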